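(* Let $N\ge 3$, $\alpha\in(0,N)$, $s\in(1,N/\alpha)$, and let $\{g_n\}\subset L^1(\mathbb{R}^N)\cap L^s(\mathbb{R}^N)$ be bounded both in $L^1(\mathbb{R}^N)$ and in $L^s(\mathbb{R}^N)$, such that (up to subsequences) for every bounded domain $\Omega\subset\mathbb{R}^N$, $g_n\to0$ strongly in $L^s(\Omega)$ as $n\to\infty$. Then, passing to a subsequence if necessary, $(I_\alpha\ast g_n)(x)\to0$ for a.e. $x\in\mathbb{R}^N$ as $n\to\infty$.
   Context: $I_\alpha(x)=A_\alpha|x|^{-(N-\alpha)}$ for $x\ne0$, with $A_\alpha=\frac{\Gamma((N-\alpha)/2)}{\Gamma(\alpha/2)\pi^{N/2}2^\alpha}$. *)

theory Defs
  imports "HOL-Analysis.Analysis"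
begin

definition riesz_const :: "nat \<Rightarrow> real \<Rightarrow> real" where
  "riesz_const N \<alpha> = Gamma ((real N - \<alpha>) / 2) /
      (Gamma (\<alpha> / 2) * pi powr (real N / 2) * 2 powr \<alpha>)"

text \<open>Riesz potential I_alpha(x) = A_alpha |x|^(-(N-alpha)) for x \<noteq> 0, N = CARD('n);
  the value at 0 (a null set) is set to 0.\<close>
definition riesz_pot :: "real \<Rightarrow> real ^ 'n \<Rightarrow> real" where
  "riesz_pot \<alpha> x = (if x = 0 then 0
      else riesz_const CARD('n) \<alpha> * norm x powr (- (real CARD('n) - \<alpha>)))"

definition riesz_conv :: "real \<Rightarrow> (real ^ 'n \<Rightarrow> real) \<Rightarrow> real ^ 'n \<Rightarrow> real" where
  "riesz_conv \<alpha> g x = (\<integral>y. riesz_pot \<alpha> (x - y) * g y \<partial>lebesgue)"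

end

theory Submission
  imports Defs "HOL-Real_Asymp.Real_Asymp"
begin
definition Kf :: "real \<Rightarrow> real ^ 'n \<Rightarrow> real" where
  "Kf b z = (if z = 0 then 0 else norm z powr (- b))"
lemma Kf_meas[measurable]: "Kf b \<in> borel_measurable borel"
  unfolding Kf_def by measurable
lemma pred_ball_borel[measurable]: "Measurable.pred borel (\<lambda>x::'a::metric_space. x \<in> ball c r)"
  using borel_open[OF open_ball] by (simp add: pred_def del: mem_ball)
lemma pred_ball_lborel[measurable]: "Measurable.pred lborel (\<lambda>x::'a::euclidean_space. x \<in> ball c r)"
  using borel_open[OF open_ball] by (simp add: pred_def del: mem_ball)
lemma Kf_shift[measurable]: "(\<lambda>x. Kf b (x - y)) \<in> borel_measurable lborel"
  unfolding measurable_lborel1 by measurable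
lemma pred_ball_lebesgue[measurable]: "Measurable.pred lebesgue (\<lambda>x::'a::euclidean_space. x \<in> ball c r)"
  by (rule measurable_completion) (rule pred_ball_lborel)
lemma Kf_shift2[measurable]: "(\<lambda>y. Kf b (x - y)) \<in> borel_measurable lborel"
  unfolding measurable_lborel1 by measurable
lemma Kf_nonneg: "Kf b z \<ge> 0" unfolding Kf_def by simp

lemma exists_dyadic:
  fixes t :: real assumes "0 < t" "t < 1"
  shows "\<exists>k::nat. (1/2)^(k+1) < t \<and> t \<le> (1/2)^k"
proof -
  define L where "L = log 2 (1/t)"
  have L0: "L > 0" using assms by (simp add: L_def)
  define k where "k = nat \<lfloor>L\<rfloor>"
  have k1: "real k \<le> L" "L < real k + 1" using L0 by (simp_all add: k_def)
  have "2 powr real k \<le> 2 powr L" using k1 by simp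
  hence a: "2 ^ k \<le> 1/t" using assms by (simp add: L_def powr_realpow)
  have "2 powr L < 2 powr (real k + 1)" using k1 by simp
  hence b: "1/t < 2 ^ (k+1)" using assms by (simp add: L_def powr_add flip: powr_realpow)
  have "(1/2)^(k+1) < t" using b assms by (simp add: power_one_over field_simps)
  moreover have "t \<le> (1/2)^k" using a assms by (simp add: power_one_over field_simps)
  ultimately show ?thesis by blast
qed

lemma alg: "2 powr (real (k+1) * b) * (V * ((1/2::real)^k)^N) = 2 powr b * V * (2 powr (b - real N))^k"
proof -
  have e1: "((1/2::real)^k)^N = 2 powr (- (real k * real N))"
    by (simp only: power_mult[symmetric] powr_minus_divide powr_realpow[OF zero_less_numeral, symmetric] power_one_over of_nat_mult) (simp add: powr_power mult.commute)
  have e2: "(2 powr (b - real N))^k = 2 powr (real k * (b - real N))"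
    by (simp add: powr_power)
  show ?thesis unfolding e1 e2
    by (simp add: powr_add[symmetric] algebra_simps)
qed

lemma cball_ind_meas: "(\<lambda>z. (c::ennreal) * indicator (cball 0 r) (z::'a::euclidean_space)) \<in> borel_measurable lborel"
  apply (rule borel_measurable_times_ennreal)
  apply (rule measurable_const, simp)
  apply (rule borel_measurable_indicator)
  apply (simp only: sets_lborel)
  apply (rule borel_closed)
  apply (rule closed_cball)
  done

lemma ennreal_term_le: "(f::nat \<Rightarrow> ennreal) k \<le> (\<Sum>i. f i)"
  by (metis ennreal_suminf_lessD nle_le nless_le)

lemma J_finite:
  assumes b: "0 < b" "b < real CARD('n)"
  shows "(\<integral>\<^sup>+z. indicator (ball 0 1) z * ennreal (Kf b (z::real^'n)) \<partial>lborel) < \<infinity>"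
proof -
  define N where "N = CARD('n)"
  define V where "V = unit_ball_vol (real N)"
  define q where "q = (2::real) powr (b - real N)"
  have q: "0 \<le> q" "q < 1" using b by (auto simp: q_def N_def intro!: powr_less_one)
  have pt: "indicator (ball 0 1) z * ennreal (Kf b z) \<le>
      (\<Sum>k. ennreal (2 powr (real (k+1) * b)) * indicator (cball 0 ((1/2)^k)) z)" for z :: "real^'n"
  proof (cases "z = 0 \<or> norm z \<ge> 1")
    case True thus ?thesis by (auto simp: Kf_def indicator_def)
  next
    case False
    hence t: "0 < norm z" "norm z < 1" by auto
    obtain k where k: "(1/2)^(k+1) < norm z" "norm z \<le> (1/2)^k" using exists_dyadic[OF t] by blast
    have "Kf b z = norm z powr (- b)" using False by (simp add: Kf_def)
    also have "\<dots> \<le> ((1/2)^(k+1)) powr (-b)" using k b by (intro powr_mono2') auto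
    also have "\<dots> = 2 powr (real (k+1) * b)"
    proof -
      have e: "(1/2::real)^(k+1) = 2 powr (- real (k+1))"
        by (simp only: powr_minus_divide powr_realpow[OF zero_less_numeral] power_one_over)
      show ?thesis by (subst e) (simp add: powr_powr algebra_simps)
    qed
    finally have "indicator (ball 0 1) z * ennreal (Kf b z) \<le> ennreal (2 powr (real (k+1) * b)) * indicator (cball 0 ((1/2)^k)) z"
      using k t by (auto simp: indicator_def intro!: ennreal_leI)
    also have "\<dots> \<le> (\<Sum>k. ennreal (2 powr (real (k+1) * b)) * indicator (cball 0 ((1/2)^k)) z)"
      by (rule ennreal_term_le)
    finally show ?thesis .
  qed
  have "(\<integral>\<^sup>+z. indicator (ball 0 1) z * ennreal (Kf b (z::real^'n)) \<partial>lborel) \<le>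
      (\<integral>\<^sup>+z. (\<Sum>k. ennreal (2 powr (real (k+1) * b)) * indicator (cball 0 ((1/2)^k)) (z::real^'n)) \<partial>lborel)"
    using pt by (auto intro!: nn_integral_mono)
  also have "\<dots> = (\<Sum>k. \<integral>\<^sup>+z. ennreal (2 powr (real (k+1) * b)) * indicator (cball 0 ((1/2)^k)) (z::real^'n) \<partial>lborel)"
    by (rule nn_integral_suminf) (rule cball_ind_meas)
  also have "\<dots> = (\<Sum>k. ennreal (2 powr b * V * q ^ k))"
  proof (intro suminf_cong)
    fix k :: nat
    have "(\<integral>\<^sup>+z. ennreal (2 powr (real (k+1) * b)) * indicator (cball 0 ((1/2)^k)) (z::real^'n) \<partial>lborel)
       = ennreal (2 powr (real (k+1) * b)) * emeasure lborel (cball (0::real^'n) ((1/2)^k))"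
      by (simp add: nn_integral_cmult_indicator)
    also have "\<dots> = ennreal (2 powr (real (k+1) * b) * (V * ((1/2)^k)^N))"
      by (simp add: emeasure_cball V_def N_def ennreal_mult)
    also have "2 powr (real (k+1) * b) * (V * ((1/2)^k)^N) = 2 powr b * V * q ^ k"
      unfolding q_def by (rule alg)
    finally show "(\<integral>\<^sup>+z. ennreal (2 powr (real (k+1) * b)) * indicator (cball 0 ((1/2)^k)) (z::real^'n) \<partial>lborel) = ennreal (2 powr b * V * q ^ k)" .
  qed
  also have "\<dots> < \<infinity>"
  proof -
    have "summable (\<lambda>k. 2 powr b * V * q^k)" using q by (intro summable_mult summable_geometric) auto
    moreover have "\<And>k. 0 \<le> 2 powr b * V * q^k" using q by (simp add: V_def)
    ultimately have "(\<Sum>k. ennreal (2 powr b * V * q ^ k)) \<noteq> \<infinity>"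
      using ennreal_suminf_neq_top by (metis infinity_ennreal_def)
    thus ?thesis by (simp add: less_top)
  qed
  finally show ?thesis .
qed

lemma lborel_translate:
  fixes f :: "'a::euclidean_space \<Rightarrow> ennreal"
  assumes [measurable]: "f \<in> borel_measurable borel"
  shows "(\<integral>\<^sup>+x. f (x - y) \<partial>lborel) = (\<integral>\<^sup>+z. f z \<partial>lborel)"
proof -
  have "(\<integral>\<^sup>+z. f z \<partial>lborel) = (\<integral>\<^sup>+z. f z \<partial>(distr lborel borel ((+) (-y))))"
    by (simp add: lborel_distr_plus)
  also have "\<dots> = (\<integral>\<^sup>+x. f (-y + x) \<partial>lborel)"
    by (rule nn_integral_distr) auto
  finally show ?thesis by simp
qed

lemma h_bound:
  assumes b: "0 < b" "b < real CARD('n)"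
  shows "\<exists>H. H < \<infinity> \<and> (\<forall>y::real^'n. (\<integral>\<^sup>+x. indicator (ball 0 R) x * ennreal (Kf b (x - y)) \<partial>lborel) \<le> H)"
proof -
  define J where "J = (\<integral>\<^sup>+z. indicator (ball 0 1) z * ennreal (Kf b (z::real^'n)) \<partial>lborel)"
  have J: "J < \<infinity>" unfolding J_def by (rule J_finite[OF b])
  have E: "emeasure lborel (ball (0::real^'n) R) < \<infinity>"
    using emeasure_bounded_finite[of "ball (0::real^'n) R"] by (simp add: less_top)
  { fix y :: "real^'n"
    have pt: "indicator (ball 0 R) x * ennreal (Kf b (x - y)) \<le>
       indicator (ball 0 1) (x - y) * ennreal (Kf b (x - y)) + indicator (ball 0 R) x" for x
    proof (cases "norm (x - y) < 1")
      case True thus ?thesis by (auto simp: indicator_def)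
    next
      case False
      hence "1 \<le> norm (x - y) powr b" using b by (intro ge_one_powr_ge_zero) auto
      hence "Kf b (x - y) \<le> 1" using False by (auto simp: Kf_def powr_minus_divide)
      thus ?thesis by (auto simp: indicator_def)
    qed
    have "(\<integral>\<^sup>+x. indicator (ball 0 R) x * ennreal (Kf b (x - y)) \<partial>lborel) \<le>
       (\<integral>\<^sup>+x. indicator (ball 0 1) (x - y) * ennreal (Kf b (x - y)) + indicator (ball 0 R) x \<partial>lborel)"
      by (rule nn_integral_mono) (rule pt)
    also have "\<dots> = (\<integral>\<^sup>+x. indicator (ball 0 1) (x - y) * ennreal (Kf b (x - y)) \<partial>lborel) + emeasure lborel (ball (0::real^'n) R)"
      by (subst nn_integral_add; (measurable | simp))
    also have "(\<integral>\<^sup>+x. indicator (ball 0 1) (x - y) * ennreal (Kf b (x - y)) \<partial>lborel) = J"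
      unfolding J_def by (rule lborel_translate[of "\<lambda>z. indicator (ball 0 1) z * ennreal (Kf b z)"]) measurable
    finally have "(\<integral>\<^sup>+x. indicator (ball 0 R) x * ennreal (Kf b (x - y)) \<partial>lborel) \<le> J + emeasure lborel (ball (0::real^'n) R)" .
  }
  moreover have "J + emeasure lborel (ball (0::real^'n) R) < \<infinity>" using J E by simp
  ultimately show ?thesis by blast
qed

lemma h_far:
  assumes b: "0 < b" and RM: "0 < R" "R < M" and y: "norm (y::real^'n) \<ge> M"
  shows "(\<integral>\<^sup>+x. indicator (ball 0 R) x * ennreal (Kf b (x - y)) \<partial>lborel) \<le>
     ennreal ((M - R) powr (-b)) * emeasure lborel (ball (0::real^'n) R)"
proof -
  have pt: "indicator (ball 0 R) x * ennreal (Kf b (x - y)) \<le> ennreal ((M - R) powr (-b)) * indicator (ball 0 R) x" for x :: "real^'n"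
  proof (cases "x \<in> ball 0 R")
    case True
    have "norm y - norm x \<le> norm (x - y)" by (metis norm_minus_commute norm_triangle_ineq2)
    moreover have "norm x < R" using True by simp
    ultimately have d: "M - R < norm (x - y)" using y by linarith
    hence "x - y \<noteq> 0" using RM by auto
    hence "Kf b (x - y) = norm (x - y) powr (-b)" by (simp add: Kf_def)
    also have "\<dots> \<le> (M - R) powr (-b)" using d RM b by (intro powr_mono2') auto
    finally show ?thesis using True by (auto intro: ennreal_leI)
  qed simp
  have "(\<integral>\<^sup>+x. indicator (ball 0 R) x * ennreal (Kf b (x - y)) \<partial>lborel) \<le>
     (\<integral>\<^sup>+x. ennreal ((M - R) powr (-b)) * indicator (ball 0 R) (x::real^'n) \<partial>lborel)"
    by (rule nn_integral_mono) (rule pt)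
  also have "\<dots> = ennreal ((M - R) powr (-b)) * emeasure lborel (ball (0::real^'n) R)"
    by (rule nn_integral_cmult_indicator) simp
  finally show ?thesis .
qed

lemma ennreal_tendsto_0I:
  fixes f :: "'a \<Rightarrow> ennreal"
  assumes "\<And>\<epsilon>. \<epsilon> > 0 \<Longrightarrow> eventually (\<lambda>n. f n \<le> ennreal \<epsilon>) F"
  shows "(f \<longlongrightarrow> 0) F"
proof (rule order_tendstoI)
  fix e :: ennreal assume "e < 0" thus "eventually (\<lambda>n. e < f n) F" by simp
next
  fix e :: ennreal assume e: "0 < e"
  show "eventually (\<lambda>n. f n < e) F"
  proof (cases e rule: ennreal_cases)
    case (real r)
    with e have r: "r > 0" by simp
    have "ennreal (r/2) < ennreal r" using r by (simp add: ennreal_lessI)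
    thus ?thesis using assms[of "r/2"] r real by (auto elim: eventually_mono)
  next
    case top
    have "f n < top" if "f n \<le> 1" for n using that by (metis ennreal_1 ennreal_less_top le_less_trans)
    thus ?thesis using assms[of 1] top by (auto elim: eventually_mono)
  qed
qed

lemma fubini_h:
  fixes f :: "real^'n \<Rightarrow> real"
  assumes [measurable]: "f \<in> borel_measurable lborel"
  shows "(\<integral>\<^sup>+x. indicator (ball 0 R) x * (\<integral>\<^sup>+y. ennreal (Kf b (x - y) * \<bar>f y\<bar>) \<partial>lborel) \<partial>lborel)
       = (\<integral>\<^sup>+y. ennreal \<bar>f y\<bar> * (\<integral>\<^sup>+x. indicator (ball 0 R) x * ennreal (Kf b (x - y)) \<partial>lborel) \<partial>lborel)"
proof -
  have m: "(\<lambda>(x,y). indicator (ball 0 R) x * ennreal (Kf b (x - y) * \<bar>f y\<bar>)) \<in> borel_measurable (lborel \<Otimes>\<^sub>M (lborel::(real^'n) measure))"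
    by measurable
  have "(\<integral>\<^sup>+x. indicator (ball 0 R) x * (\<integral>\<^sup>+y. ennreal (Kf b (x - y) * \<bar>f y\<bar>) \<partial>lborel) \<partial>lborel)
      = (\<integral>\<^sup>+x. (\<integral>\<^sup>+y. indicator (ball 0 R) x * ennreal (Kf b (x - y) * \<bar>f y\<bar>) \<partial>lborel) \<partial>lborel)"
    by (intro nn_integral_cong nn_integral_cmult[symmetric]) measurable
  also have "\<dots> = (\<integral>\<^sup>+y. (\<integral>\<^sup>+x. indicator (ball 0 R) x * ennreal (Kf b (x - y) * \<bar>f y\<bar>) \<partial>lborel) \<partial>lborel)"
    using lborel_pair.Fubini'[OF m] by simp
  also have "\<dots> = (\<integral>\<^sup>+y. ennreal \<bar>f y\<bar> * (\<integral>\<^sup>+x. indicator (ball 0 R) x * ennreal (Kf b (x - y)) \<partial>lborel) \<partial>lborel)"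
  proof (rule nn_integral_cong)
    fix y :: "real^'n"
    have "(\<integral>\<^sup>+x. indicator (ball 0 R) x * ennreal (Kf b (x - y) * \<bar>f y\<bar>) \<partial>lborel)
        = (\<integral>\<^sup>+x. ennreal \<bar>f y\<bar> * (indicator (ball 0 R) x * ennreal (Kf b (x - y))) \<partial>lborel)"
      by (intro nn_integral_cong) (simp add: ennreal_mult Kf_nonneg mult_ac)
    also have "\<dots> = ennreal \<bar>f y\<bar> * (\<integral>\<^sup>+x. indicator (ball 0 R) x * ennreal (Kf b (x - y)) \<partial>lborel)"
      by (rule nn_integral_cmult) measurable
    finally show "(\<integral>\<^sup>+x. indicator (ball 0 R) x * ennreal (Kf b (x - y) * \<bar>f y\<bar>) \<partial>lborel)
        = ennreal \<bar>f y\<bar> * (\<integral>\<^sup>+x. indicator (ball 0 R) x * ennreal (Kf b (x - y)) \<partial>lborel)" .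
  qed
  finally show ?thesis .
qed

lemma core:
  fixes gb :: "nat \<Rightarrow> real^'n \<Rightarrow> real"
  assumes b: "0 < b" "b < real CARD('n)" and R: "0 < R"
    and meas[measurable]: "\<And>n. gb n \<in> borel_measurable lborel"
    and H1: "\<And>M. 0 < M \<Longrightarrow> (\<lambda>n. \<integral>\<^sup>+y. indicator (ball 0 M) y * ennreal \<bar>gb n y\<bar> \<partial>lborel) \<longlonglongrightarrow> 0"
    and H2: "\<And>n. (\<integral>\<^sup>+y. ennreal \<bar>gb n y\<bar> \<partial>lborel) \<le> ennreal C"
  shows "(\<lambda>n. \<integral>\<^sup>+x. indicator (ball 0 R) x * (\<integral>\<^sup>+y. ennreal (Kf b (x - y) * \<bar>gb n y\<bar>) \<partial>lborel) \<partial>lborel) \<longlonglongrightarrow> 0"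
proof (rule ennreal_tendsto_0I)
  fix \<epsilon> :: real assume \<epsilon>: "\<epsilon> > 0"
  define h where "h y = (\<integral>\<^sup>+x. indicator (ball 0 R) x * ennreal (Kf b (x - y)) \<partial>lborel)" for y :: "real^'n"
  obtain H where H: "H < \<infinity>" "\<And>y. h y \<le> H" using h_bound[OF b, of R] unfolding h_def by blast
  obtain H' where H': "H' \<ge> 0" "H = ennreal H'" using H(1) by (cases H) auto
  define vR where "vR = unit_ball_vol (real CARD('n)) * R ^ CARD('n)"
  have vR: "emeasure lborel (ball (0::real^'n) R) = ennreal vR" "vR \<ge> 0"
    using R by (simp_all add: emeasure_ball vR_def)
  define C0 where "C0 = max C 0"
  have C0: "C0 \<ge> 0" "ennreal C \<le> ennreal C0" by (auto simp: C0_def intro: ennreal_leI)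
  have "filterlim (\<lambda>M. M - R) at_top at_top" by real_asymp
  hence "((\<lambda>M. (M - R) powr (-b)) \<longlongrightarrow> 0) at_top" using b by (intro tendsto_neg_powr) auto
  hence "((\<lambda>M. (M - R) powr (-b) * vR * C0) \<longlongrightarrow> 0 * vR * C0) at_top"
    by (intro tendsto_mult tendsto_const)
  hence "eventually (\<lambda>M. (M - R) powr (-b) * vR * C0 < \<epsilon>/2) at_top"
    using \<epsilon> by (intro order_tendstoD(2)) auto
  moreover have "eventually (\<lambda>M. M > R) at_top" by (rule eventually_gt_at_top)
  ultimately have "eventually (\<lambda>M. (M - R) powr (-b) * vR * C0 < \<epsilon>/2 \<and> M > R) at_top"
    by (rule eventually_conj)
  then obtain M where M: "(M - R) powr (-b) * vR * C0 < \<epsilon>/2" "M > R"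
    by (auto simp: eventually_at_top_linorder)
  define \<delta> where "\<delta> = (M - R) powr (-b) * vR"
  have \<delta>: "\<delta> \<ge> 0" using vR by (simp add: \<delta>_def)
  have hM: "h y \<le> ennreal H' * indicator (ball 0 M) y + ennreal \<delta>" for y
  proof (cases "y \<in> ball 0 M")
    case True thus ?thesis using H(2)[of y] H' by (simp add: add_increasing2)
  next
    case False
    hence "norm y \<ge> M" by simp
    hence "h y \<le> ennreal ((M - R) powr (-b)) * emeasure lborel (ball (0::real^'n) R)"
      unfolding h_def using h_far[OF b(1) R M(2)] by blast
    also have "\<dots> = ennreal \<delta>" using vR by (simp add: \<delta>_def ennreal_mult)
    finally show ?thesis using False by simp
  qed
  have "(\<lambda>n. \<integral>\<^sup>+y. indicator (ball 0 M) y * ennreal \<bar>gb n y\<bar> \<partial>lborel) \<longlonglongrightarrow> 0"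
    using H1 M R by simp
  moreover have "ennreal (\<epsilon> / (2 * (H' + 1))) > 0" using \<epsilon> H' by simp
  ultimately have ev: "eventually (\<lambda>n. (\<integral>\<^sup>+y. indicator (ball 0 M) y * ennreal \<bar>gb n y\<bar> \<partial>lborel) < ennreal (\<epsilon> / (2 * (H' + 1)))) sequentially"
    by (rule order_tendstoD(2))
  show "eventually (\<lambda>n. (\<integral>\<^sup>+x. indicator (ball 0 R) x * (\<integral>\<^sup>+y. ennreal (Kf b (x - y) * \<bar>gb n y\<bar>) \<partial>lborel) \<partial>lborel) \<le> ennreal \<epsilon>) sequentially"
    using ev
  proof (rule eventually_mono)
    fix n
    assume n: "(\<integral>\<^sup>+y. indicator (ball 0 M) y * ennreal \<bar>gb n y\<bar> \<partial>lborel) < ennreal (\<epsilon> / (2 * (H' + 1)))"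
    have "(\<integral>\<^sup>+x. indicator (ball 0 R) x * (\<integral>\<^sup>+y. ennreal (Kf b (x - y) * \<bar>gb n y\<bar>) \<partial>lborel) \<partial>lborel)
        = (\<integral>\<^sup>+y. ennreal \<bar>gb n y\<bar> * h y \<partial>lborel)"
      unfolding h_def by (rule fubini_h) measurable
    also have "\<dots> \<le> (\<integral>\<^sup>+y. ennreal H' * (indicator (ball 0 M) y * ennreal \<bar>gb n y\<bar>) + ennreal \<delta> * ennreal \<bar>gb n y\<bar> \<partial>lborel)"
    proof (rule nn_integral_mono)
      fix y
      have "ennreal \<bar>gb n y\<bar> * h y \<le> ennreal \<bar>gb n y\<bar> * (ennreal H' * indicator (ball 0 M) y + ennreal \<delta>)"
        by (rule mult_left_mono[OF hM]) simp
      thus "ennreal \<bar>gb n y\<bar> * h y \<le> ennreal H' * (indicator (ball 0 M) y * ennreal \<bar>gb n y\<bar>) + ennreal \<delta> * ennreal \<bar>gb n y\<bar>"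
        by (simp add: algebra_simps)
    qed
    also have "\<dots> = ennreal H' * (\<integral>\<^sup>+y. indicator (ball 0 M) y * ennreal \<bar>gb n y\<bar> \<partial>lborel) + ennreal \<delta> * (\<integral>\<^sup>+y. ennreal \<bar>gb n y\<bar> \<partial>lborel)"
    proof -
      have a1: "(\<integral>\<^sup>+y. ennreal H' * (indicator (ball 0 M) y * ennreal \<bar>gb n y\<bar>) \<partial>lborel) = ennreal H' * (\<integral>\<^sup>+y. indicator (ball 0 M) y * ennreal \<bar>gb n y\<bar> \<partial>lborel)"
        by (rule nn_integral_cmult) measurable
      have a2: "(\<integral>\<^sup>+y. ennreal \<delta> * ennreal \<bar>gb n y\<bar> \<partial>lborel) = ennreal \<delta> * (\<integral>\<^sup>+y. ennreal \<bar>gb n y\<bar> \<partial>lborel)"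
        by (rule nn_integral_cmult) measurable
      have "(\<integral>\<^sup>+y. ennreal H' * (indicator (ball 0 M) y * ennreal \<bar>gb n y\<bar>) + ennreal \<delta> * ennreal \<bar>gb n y\<bar> \<partial>lborel)
         = (\<integral>\<^sup>+y. ennreal H' * (indicator (ball 0 M) y * ennreal \<bar>gb n y\<bar>) \<partial>lborel) + (\<integral>\<^sup>+y. ennreal \<delta> * ennreal \<bar>gb n y\<bar> \<partial>lborel)"
        by (rule nn_integral_add) measurable
      thus ?thesis using a1 a2 by simp
    qed
    also have "\<dots> \<le> ennreal H' * ennreal (\<epsilon> / (2 * (H' + 1))) + ennreal \<delta> * ennreal C0"
      using n H2[of n] C0 by (intro add_mono mult_left_mono) (auto intro: order.trans)
    also have "\<dots> = ennreal (H' * (\<epsilon> / (2 * (H' + 1))) + \<delta> * C0)"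
    proof -
      have p: "0 \<le> \<epsilon> / (2 * (H' + 1))" using H' \<epsilon> by simp
      have p2: "0 \<le> H' * \<epsilon> / (2 * H' + 2)" "0 \<le> \<delta> * C0" using H' \<epsilon> \<delta> C0 by simp_all
      show ?thesis
        using H' \<delta> C0 p p2 by (simp add: ennreal_mult[symmetric] ennreal_plus[symmetric] del: ennreal_plus)
    qed
    also have "\<dots> \<le> ennreal \<epsilon>"
    proof (rule ennreal_leI)
      have "H' * (\<epsilon> / (2 * (H' + 1))) \<le> \<epsilon> / 2"
        using H' \<epsilon> by (simp add: field_simps)
      moreover have "\<delta> * C0 < \<epsilon> / 2" using M(1) by (simp add: \<delta>_def)
      ultimately show "H' * (\<epsilon> / (2 * (H' + 1))) + \<delta> * C0 \<le> \<epsilon>" by linarith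
    qed
    finally show "(\<integral>\<^sup>+x. indicator (ball 0 R) x * (\<integral>\<^sup>+y. ennreal (Kf b (x - y) * \<bar>gb n y\<bar>) \<partial>lborel) \<partial>lborel) \<le> ennreal \<epsilon>" .
  qed
qed

lemma le_ennreal_not_inf: "(x::ennreal) \<le> ennreal c \<Longrightarrow> x \<noteq> \<infinity>"
  using ennreal_less_top[of c] by (metis infinity_ennreal_def leD)

lemma ennreal_series_term_0:
  fixes t :: "nat \<Rightarrow> ennreal"
  assumes "(\<Sum>k. t k) \<noteq> \<infinity>"
  shows "t \<longlonglongrightarrow> 0"
proof -
  have fin: "t k \<noteq> \<infinity>" for k
    using ennreal_term_le[of t k] assms by (metis infinity_ennreal_def top.extremum_uniqueI)
  hence te: "t k = ennreal (enn2real (t k))" for k by (simp add: ennreal_enn2real_if)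
  have "(\<Sum>k. ennreal (enn2real (t k))) \<noteq> top" using assms te[symmetric] by simp
  hence "summable (\<lambda>k. enn2real (t k))" by (intro summable_suminf_not_top) auto
  hence "(\<lambda>k. enn2real (t k)) \<longlonglongrightarrow> 0" by (rule summable_LIMSEQ_zero)
  hence "(\<lambda>k. ennreal (enn2real (t k))) \<longlonglongrightarrow> ennreal 0" by (rule tendsto_ennrealI)
  thus ?thesis using te by simp
qed

lemma ae_subseq:
  fixes F :: "nat \<Rightarrow> real^'n \<Rightarrow> ennreal"
  assumes [measurable]: "\<And>n. F n \<in> borel_measurable lborel"
    and conv: "\<And>R. 0 < R \<Longrightarrow> (\<lambda>n. \<integral>\<^sup>+x. indicator (ball 0 R) x * F n x \<partial>lborel) \<longlonglongrightarrow> 0"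
  shows "\<exists>r. strict_mono r \<and> (AE x in lborel. (\<lambda>k. F (r k) x) \<longlonglongrightarrow> 0)"
proof -
  define a where "a k n = (\<integral>\<^sup>+x. indicator (ball 0 (real k + 1)) x * F n x \<partial>lborel)" for k n
  have ex: "\<exists>n>m. a k n \<le> ennreal ((1/2)^k)" for k m
  proof -
    have "(\<lambda>n. a k n) \<longlonglongrightarrow> 0" unfolding a_def by (rule conv) simp
    moreover have "ennreal ((1/2)^k) > 0" by simp
    ultimately have "eventually (\<lambda>n. a k n < ennreal ((1/2)^k)) sequentially"
      by (rule order_tendstoD(2))
    then obtain N where N: "\<And>n. n \<ge> N \<Longrightarrow> a k n < ennreal ((1/2)^k)"
      by (auto simp: eventually_sequentially)
    show ?thesis using N[of "max N (Suc m)"] by (intro exI[of _ "max N (Suc m)"]) auto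
  qed
  obtain f where f: "\<And>k m. f k m > m \<and> a k (f k m) \<le> ennreal ((1/2)^k)"
  proof -
    have c1: "\<forall>k. \<exists>g. \<forall>m. m < g m \<and> a k (g m) \<le> ennreal ((1/2)^k)"
    proof (intro allI choice)
      fix k m show "\<exists>n. m < n \<and> a k n \<le> ennreal ((1/2)^k)" using ex by blast
    qed
    hence "\<exists>f. \<forall>k. \<forall>m. m < f k m \<and> a k (f k m) \<le> ennreal ((1/2)^k)" by (rule choice)
    thus ?thesis using that by blast
  qed
  define r where "r = rec_nat (f 0 0) (\<lambda>k rk. f (Suc k) rk)"
  have r0: "r 0 = f 0 0" and rS: "r (Suc k) = f (Suc k) (r k)" for k by (simp_all add: r_def)
  have mono: "strict_mono r" unfolding strict_mono_Suc_iff using f rS by simp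
  have ar: "a k (r k) \<le> ennreal ((1/2)^k)" for k
  proof (cases k)
    case 0 thus ?thesis using f[of 0 0] by (simp add: r0)
  next
    case (Suc j) thus ?thesis using f[where k="Suc j" and m="r j"] by (simp only: rS)
  qed
  define G where "G x = (\<Sum>k. indicator (ball 0 (real k + 1)) x * F (r k) x)" for x
  have Gm: "G \<in> borel_measurable lborel" unfolding G_def by measurable
  have "(\<integral>\<^sup>+x. G x \<partial>lborel) = (\<Sum>k. a k (r k))"
    unfolding G_def a_def by (rule nn_integral_suminf) measurable
  also have "\<dots> \<le> (\<Sum>k. ennreal ((1/2)^k))"
    using ar by (intro suminf_le) auto
  also have "\<dots> = ennreal 2"
  proof -
    have "(\<Sum>k. ennreal ((1/2::real)^k)) = ennreal (\<Sum>k. (1/2::real)^k)"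
      by (rule suminf_ennreal2) (auto intro: summable_geometric)
    also have "(\<Sum>k. (1/2::real)^k) = 2"
      using suminf_geometric[of "1/2::real"] by (simp add: power_one_over)
    finally show ?thesis .
  qed
  finally have "(\<integral>\<^sup>+x. G x \<partial>lborel) \<noteq> \<infinity>" by (rule le_ennreal_not_inf)
  hence "AE x in lborel. G x \<noteq> \<infinity>" by (intro nn_integral_PInf_AE Gm)
  hence "AE x in lborel. (\<lambda>k. F (r k) x) \<longlonglongrightarrow> 0"
  proof (rule AE_mp[OF _ AE_I2], intro impI)
    fix x assume "G x \<noteq> \<infinity>"
    hence t: "(\<lambda>k. indicator (ball 0 (real k + 1)) x * F (r k) x) \<longlonglongrightarrow> 0"
      unfolding G_def by (rule ennreal_series_term_0)
    have "eventually (\<lambda>k. indicator (ball 0 (real k + 1)) x * F (r k) x = F (r k) x) sequentially"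
    proof -
      obtain N :: nat where "norm x < real N" using reals_Archimedean2 by blast
      thus ?thesis by (auto simp: eventually_sequentially intro!: exI[of _ N])
    qed
    thus "(\<lambda>k. F (r k) x) \<longlonglongrightarrow> 0" using t by (rule Lim_transform_eventually[rotated]) 
  qed
  thus ?thesis using mono by blast
qed

lemma young_type:
  fixes t \<delta> s :: real assumes "0 \<le> t" "0 < \<delta>" "1 < s"
  shows "t \<le> \<delta> + \<delta> powr (1 - s) * t powr s"
proof (cases "t \<le> \<delta>")
  case True
  have "0 \<le> \<delta> powr (1 - s) * t powr s" by simp
  thus ?thesis using True by linarith
next
  case False
  hence t: "t > \<delta>" by simp
  have e: "t powr s = t powr (s - 1) * t"
  proof -
    have "t powr (s - 1) * t = t powr (s - 1) * t powr 1" using t assms by simp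
    also have "\<dots> = t powr s" by (simp only: powr_add[symmetric]) simp
    finally show ?thesis by simp
  qed
  have m: "\<delta> powr (s - 1) \<le> t powr (s - 1)"
    using t assms by (intro powr_mono2) auto
  have one: "\<delta> powr (1 - s) * \<delta> powr (s - 1) = 1"
    using assms by (simp add: powr_add[symmetric])
  have "t = \<delta> powr (1 - s) * \<delta> powr (s - 1) * t" using one by simp
  also have "\<dots> \<le> \<delta> powr (1 - s) * t powr (s - 1) * t"
    using m t assms by (intro mult_right_mono mult_left_mono) auto
  also have "\<dots> = \<delta> powr (1 - s) * t powr s" using e by simp
  finally show ?thesis using assms by simp
qed

lemma local_L1:
  fixes g :: "nat \<Rightarrow> real^'n \<Rightarrow> real"
  assumes s: "1 < s" and M: "0 < M"
    and gm[measurable]: "\<And>n. g n \<in> borel_measurable lebesgue"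
    and gi: "\<And>n. integrable lebesgue (\<lambda>x. \<bar>g n x\<bar> powr s)"
    and loc: "(\<lambda>n. (LINT x:ball 0 M|lebesgue. \<bar>g n x\<bar> powr s) powr (1 / s)) \<longlonglongrightarrow> 0"
  shows "(\<lambda>n. \<integral>\<^sup>+y. indicator (ball 0 M) y * ennreal \<bar>g n y\<bar> \<partial>lebesgue) \<longlonglongrightarrow> 0"
proof (rule ennreal_tendsto_0I)
  have gs[measurable]: "(\<lambda>x. \<bar>g n x\<bar> powr s) \<in> borel_measurable lebesgue" for n
    using gi[of n] by (rule borel_measurable_integrable)
  fix \<epsilon> :: real assume \<epsilon>: "\<epsilon> > 0"
  define S where "S n = (LINT x:ball 0 M|lebesgue. \<bar>g n x\<bar> powr s)" for n
  have S0: "S n \<ge> 0" for n unfolding S_def set_lebesgue_integral_def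
    by (intro integral_nonneg_AE) (auto simp: indicator_def)
  have "(\<lambda>n. (S n powr (1 / s)) powr s) \<longlonglongrightarrow> 0"
  proof (rule tendsto_zero_powrI[of "\<lambda>n. S n powr (1/s)" sequentially "\<lambda>_. s" s])
    show "(\<lambda>n. S n powr (1/s)) \<longlonglongrightarrow> 0" using loc by (simp add: S_def)
  qed (use s in auto)
  moreover have "(S n powr (1 / s)) powr s = S n" for n using S0[of n] s by (simp add: powr_powr)
  ultimately have St: "S \<longlonglongrightarrow> 0" by simp
  define V where "V = unit_ball_vol (real CARD('n)) * M ^ CARD('n)"
  have V: "V \<ge> 0" "emeasure lebesgue (ball (0::real^'n) M) = ennreal V"
    using M by (simp_all add: V_def emeasure_ball)
  define \<delta> where "\<delta> = \<epsilon> / (2 * (V + 1))"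
  have \<delta>: "\<delta> > 0" using \<epsilon> V by (simp add: \<delta>_def)
  have "((\<lambda>n. \<delta> powr (1 - s) * S n) \<longlongrightarrow> \<delta> powr (1 - s) * 0) sequentially"
    by (intro tendsto_mult tendsto_const St)
  hence "eventually (\<lambda>n. \<delta> powr (1 - s) * S n < \<epsilon> / 2) sequentially"
    using \<epsilon> by (intro order_tendstoD(2)) auto
  thus "eventually (\<lambda>n. (\<integral>\<^sup>+y. indicator (ball 0 M) y * ennreal \<bar>g n y\<bar> \<partial>lebesgue) \<le> ennreal \<epsilon>) sequentially"
  proof (rule eventually_mono)
    fix n assume n: "\<delta> powr (1 - s) * S n < \<epsilon> / 2"
    have pt: "indicator (ball 0 M) y * ennreal \<bar>g n y\<bar> \<le>
        ennreal \<delta> * indicator (ball 0 M) y + ennreal (\<delta> powr (1 - s)) * ennreal (indicator (ball 0 M) y * \<bar>g n y\<bar> powr s)" for y :: "real^'n"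
    proof (cases "y \<in> ball 0 M")
      case True
      have "\<bar>g n y\<bar> \<le> \<delta> + \<delta> powr (1 - s) * \<bar>g n y\<bar> powr s" using young_type[OF _ \<delta> s] by simp
      hence "ennreal \<bar>g n y\<bar> \<le> ennreal (\<delta> + \<delta> powr (1 - s) * \<bar>g n y\<bar> powr s)" by (rule ennreal_leI)
      thus ?thesis using True \<delta> by (simp add: ennreal_plus ennreal_mult)
    qed simp
    have ii: "integrable lebesgue (\<lambda>y. indicator (ball 0 M) y * \<bar>g n y\<bar> powr s)"
      using integrable_mult_indicator[of "ball 0 M" lebesgue "\<lambda>x. \<bar>g n x\<bar> powr s"] gi[of n] by simp
    have "(\<integral>\<^sup>+y. indicator (ball 0 M) y * ennreal \<bar>g n y\<bar> \<partial>lebesgue) \<le>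
       (\<integral>\<^sup>+y. ennreal \<delta> * indicator (ball 0 M) y + ennreal (\<delta> powr (1 - s)) * ennreal (indicator (ball 0 M) y * \<bar>g n y\<bar> powr s) \<partial>lebesgue)"
      by (rule nn_integral_mono) (rule pt)
    also have "\<dots> = ennreal \<delta> * emeasure lebesgue (ball (0::real^'n) M) + ennreal (\<delta> powr (1 - s)) * (\<integral>\<^sup>+y. ennreal (indicator (ball 0 M) y * \<bar>g n y\<bar> powr s) \<partial>lebesgue)"
    proof -
      have a1: "(\<integral>\<^sup>+y. ennreal \<delta> * indicator (ball 0 M) (y::real^'n) \<partial>lebesgue) = ennreal \<delta> * emeasure lebesgue (ball (0::real^'n) M)"
        by (rule nn_integral_cmult_indicator) simp
      have a2: "(\<integral>\<^sup>+y. ennreal (\<delta> powr (1 - s)) * ennreal (indicator (ball 0 M) y * \<bar>g n y\<bar> powr s) \<partial>lebesgue)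
          = ennreal (\<delta> powr (1 - s)) * (\<integral>\<^sup>+y. ennreal (indicator (ball 0 M) y * \<bar>g n y\<bar> powr s) \<partial>lebesgue)"
        by (rule nn_integral_cmult) measurable
      have "(\<integral>\<^sup>+y. ennreal \<delta> * indicator (ball 0 M) y + ennreal (\<delta> powr (1 - s)) * ennreal (indicator (ball 0 M) y * \<bar>g n y\<bar> powr s) \<partial>lebesgue)
         = (\<integral>\<^sup>+y. ennreal \<delta> * indicator (ball 0 M) (y::real^'n) \<partial>lebesgue) + (\<integral>\<^sup>+y. ennreal (\<delta> powr (1 - s)) * ennreal (indicator (ball 0 M) y * \<bar>g n y\<bar> powr s) \<partial>lebesgue)"
        by (rule nn_integral_add) measurable
      thus ?thesis using a1 a2 by simp
    qed
    also have "(\<integral>\<^sup>+y. ennreal (indicator (ball 0 M) y * \<bar>g n y\<bar> powr s) \<partial>lebesgue) = ennreal (S n)"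
      unfolding S_def set_lebesgue_integral_def
      by (subst nn_integral_eq_integral[OF ii]) (auto simp: indicator_def)
    also have "ennreal \<delta> * emeasure lebesgue (ball (0::real^'n) M) + ennreal (\<delta> powr (1 - s)) * ennreal (S n)
        = ennreal (\<delta> * V + \<delta> powr (1 - s) * S n)"
    proof -
      have nn: "0 \<le> \<delta> * V" "0 \<le> \<delta> powr (1 - s) * S n" using V \<delta> S0[of n] by simp_all
      show ?thesis
        using V \<delta> S0[of n] nn by (simp only: V(2)) (simp add: ennreal_mult[symmetric] ennreal_plus[symmetric] del: ennreal_plus)
    qed
    also have "\<dots> \<le> ennreal \<epsilon>"
    proof (rule ennreal_leI)
      have "\<delta> * V \<le> \<epsilon> / 2" using V \<epsilon> by (simp add: \<delta>_def field_simps)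
      thus "\<delta> * V + \<delta> powr (1 - s) * S n \<le> \<epsilon>" using n by linarith
    qed
    finally show "(\<integral>\<^sup>+y. indicator (ball 0 M) y * ennreal \<bar>g n y\<bar> \<partial>lebesgue) \<le> ennreal \<epsilon>" .
  qed
qed

lemma riesz_pot_Kf: "riesz_pot \<alpha> z = riesz_const CARD('n) \<alpha> * Kf (real CARD('n) - \<alpha>) (z::real^'n)"
  unfolding riesz_pot_def Kf_def by simp

theorem lemma2p6:
  fixes g :: "nat \<Rightarrow> real ^ 'n \<Rightarrow> real" and \<alpha> s :: real
  assumes N3: "CARD('n) \<ge> 3"
    and alpha: "0 < \<alpha>" "\<alpha> < real CARD('n)"
    and s: "1 < s" "s < real CARD('n) / \<alpha>"
    and L1: "\<And>n. integrable lebesgue (g n)"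
    and Ls: "\<And>n. g n \<in> borel_measurable lebesgue"
            "\<And>n. integrable lebesgue (\<lambda>x. \<bar>g n x\<bar> powr s)"
    and bdd1: "\<exists>C. \<forall>n. (\<integral>x. \<bar>g n x\<bar> \<partial>lebesgue) \<le> C"
    and bdds: "\<exists>C. \<forall>n. (\<integral>x. \<bar>g n x\<bar> powr s \<partial>lebesgue) powr (1 / s) \<le> C"
    and loc: "\<And>\<Omega>. open \<Omega> \<Longrightarrow> connected \<Omega> \<Longrightarrow> bounded \<Omega> \<Longrightarrow>
              (\<lambda>n. (LINT x:\<Omega>|lebesgue. \<bar>g n x\<bar> powr s) powr (1 / s)) \<longlonglongrightarrow> 0"
  shows "\<exists>r. strict_mono r \<and>
           (AE x in lebesgue. (\<lambda>k. riesz_conv \<alpha> (g (r k)) x) \<longlonglongrightarrow> 0)"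
proof -
  define b where "b = real CARD('n) - \<alpha>"
  have b: "0 < b" "b < real CARD('n)" using alpha by (simp_all add: b_def)
  define A where "A = riesz_const CARD('n) \<alpha>"
  have gm[measurable]: "\<And>n. g n \<in> borel_measurable lebesgue" by (rule Ls(1))
  have "\<forall>n. \<exists>g'. g' \<in> borel_measurable lborel \<and> (AE x in lborel. g n x = g' x)"
    using completion_ex_borel_measurable_real[OF Ls(1)] by blast
  then obtain gb where gb: "\<And>n. gb n \<in> borel_measurable lborel" "\<And>n. AE x in lborel. g n x = gb n x"
    by metis
  note gb(1)[measurable]
  obtain C where C: "\<And>n. (\<integral>x. \<bar>g n x\<bar> \<partial>lebesgue) \<le> C" using bdd1 by blast
  have tr: "(\<integral>\<^sup>+y. u y * ennreal \<bar>g n y\<bar> \<partial>lebesgue) = (\<integral>\<^sup>+y. u y * ennreal \<bar>gb n y\<bar> \<partial>lborel)"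
    for u :: "real^'n \<Rightarrow> ennreal" and n
    unfolding nn_integral_completion using gb(2)[of n] by (intro nn_integral_cong_AE) auto
  have H1: "(\<lambda>n. \<integral>\<^sup>+y. indicator (ball 0 M) y * ennreal \<bar>gb n y\<bar> \<partial>lborel) \<longlonglongrightarrow> 0" if M: "0 < M" for M
  proof -
    have "(\<lambda>n. \<integral>\<^sup>+y. indicator (ball 0 M) y * ennreal \<bar>g n y\<bar> \<partial>lebesgue) \<longlonglongrightarrow> 0"
      by (rule local_L1[OF s(1) M Ls(1) Ls(2) loc]) (auto intro: convex_connected)
    thus ?thesis using tr[of "indicator (ball 0 M)"] by simp
  qed
  have H2: "(\<integral>\<^sup>+y. ennreal \<bar>gb n y\<bar> \<partial>lborel) \<le> ennreal C" for n
  proof -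
    have "(\<integral>\<^sup>+y. ennreal \<bar>gb n y\<bar> \<partial>lborel) = (\<integral>\<^sup>+y. ennreal \<bar>g n y\<bar> \<partial>lebesgue)"
      using tr[of "\<lambda>_. 1" n] by simp
    also have "\<dots> = ennreal (\<integral>y. \<bar>g n y\<bar> \<partial>lebesgue)"
      by (rule nn_integral_eq_integral) (auto intro: L1)
    also have "\<dots> \<le> ennreal C" using C[of n] by (rule ennreal_leI)
    finally show ?thesis .
  qed
  define F where "F n x = (\<integral>\<^sup>+y. ennreal (Kf b (x - y) * \<bar>gb n y\<bar>) \<partial>lborel)" for n x
  have Fm[measurable]: "F n \<in> borel_measurable lborel" for n
    unfolding F_def by measurable
  have conv: "(\<lambda>n. \<integral>\<^sup>+x. indicator (ball 0 R) x * F n x \<partial>lborel) \<longlonglongrightarrow> 0" if "0 < R" for R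
    unfolding F_def by (rule core[OF b that gb(1) H1 H2])
  obtain r where r: "strict_mono r" "AE x in lborel. (\<lambda>k. F (r k) x) \<longlonglongrightarrow> 0"
    using ae_subseq[OF Fm conv] by blast
  have bound: "\<bar>riesz_conv \<alpha> (g n) x\<bar> \<le> \<bar>A\<bar> * enn2real (F n x)" for n x
  proof -
    have m1: "(\<lambda>y. riesz_pot \<alpha> (x - y) * g n y) \<in> borel_measurable lebesgue"
    proof -
      have "(\<lambda>y. Kf b (x - y)) \<in> borel_measurable lebesgue"
        by (rule measurable_completion) (rule Kf_shift2)
      thus ?thesis unfolding riesz_pot_Kf b_def[symmetric] by measurable
    qed
    have "\<bar>riesz_conv \<alpha> (g n) x\<bar> \<le> (\<integral>y. \<bar>riesz_pot \<alpha> (x - y) * g n y\<bar> \<partial>lebesgue)"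
      unfolding riesz_conv_def using integral_norm_bound[of lebesgue "\<lambda>y. riesz_pot \<alpha> (x - y) * g n y"]
      by simp
    also have "\<dots> = enn2real (\<integral>\<^sup>+y. ennreal \<bar>riesz_pot \<alpha> (x - y) * g n y\<bar> \<partial>lebesgue)"
      by (rule integral_eq_nn_integral) (use m1 in auto)
    also have "(\<integral>\<^sup>+y. ennreal \<bar>riesz_pot \<alpha> (x - y) * g n y\<bar> \<partial>lebesgue)
        = (\<integral>\<^sup>+y. ennreal \<bar>A\<bar> * ennreal (Kf b (x - y) * \<bar>gb n y\<bar>) \<partial>lborel)"
      unfolding nn_integral_completion
    proof (rule nn_integral_cong_AE)
      show "AE y in lborel. ennreal \<bar>riesz_pot \<alpha> (x - y) * g n y\<bar> = ennreal \<bar>A\<bar> * ennreal (Kf b (x - y) * \<bar>gb n y\<bar>)"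
        using gb(2)[of n]
      proof eventually_elim
        case (elim y)
        have "\<bar>riesz_pot \<alpha> (x - y) * g n y\<bar> = \<bar>A\<bar> * (Kf b (x - y) * \<bar>gb n y\<bar>)"
          using elim by (simp add: riesz_pot_Kf A_def b_def abs_mult Kf_nonneg)
        thus ?case by (simp add: ennreal_mult Kf_nonneg)
      qed
    qed
    also have "\<dots> = ennreal \<bar>A\<bar> * F n x"
      unfolding F_def by (rule nn_integral_cmult) measurable
    also have "enn2real \<dots> = \<bar>A\<bar> * enn2real (F n x)" by (simp add: enn2real_mult)
    finally show ?thesis .
  qed
  have "AE x in lebesgue. (\<lambda>k. riesz_conv \<alpha> (g (r k)) x) \<longlonglongrightarrow> 0"
    using AE_completion[OF r(2)]
  proof (rule AE_mp[OF _ AE_I2], intro impI)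
    fix x assume Fx: "(\<lambda>k. F (r k) x) \<longlonglongrightarrow> 0"
    have "(\<lambda>k. enn2real (F (r k) x)) \<longlonglongrightarrow> 0"
      by (rule tendsto_enn2real) (use Fx in simp_all)
    hence "(\<lambda>k. \<bar>A\<bar> * enn2real (F (r k) x)) \<longlonglongrightarrow> \<bar>A\<bar> * 0"
      by (intro tendsto_mult tendsto_const)
    hence t: "(\<lambda>k. \<bar>A\<bar> * enn2real (F (r k) x)) \<longlonglongrightarrow> 0" by simp
    show "(\<lambda>k. riesz_conv \<alpha> (g (r k)) x) \<longlonglongrightarrow> 0"
      by (rule Lim_null_comparison[OF _ t]) (auto intro: always_eventually bound)
  qed
  thus ?thesis using r(1) by blast
qed
end
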